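(* For every integer $n\ge 5$, $$\mathrm{spt}2'_{do}(n)=p'_{do}(n-4)-p'_{do}(n-3)-p'_{do}(n-2).$$
   Context: For a partition $\pi$, $s(\pi)$ is its smallest part. $\mathrm{Spt}2_{do}(n)$ is the set of partitions $\pi$ of $n$ in which $s(\pi)$ occurs exactly twice and the remaining parts (those larger than $s(\pi)$) are pairwise distinct and each has parity different from that of $s(\pi)$. $\mathrm{spt}2'_{do}(n)$ is the number of such partitions having an even number of parts greater than $s(\pi)$ minus the number having an odd number of such parts. $p'_{do}(n)$ is the number of partitions of $n$ into distinct odd parts with an even number of parts minus the number with an odd number of parts, with $p'_{do}(0)=1$. *)

theory Defs
  imports Main "HOL-Library.Multiset"
begin

definition partitions :: "nat \<Rightarrow> nat multiset set" where
  "partitions n = {\<pi>. (\<forall>x\<in>#\<pi>. 0 < x) \<and> sum_mset \<pi> = n}"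

definition spart :: "nat multiset \<Rightarrow> nat" where
  "spart \<pi> = Min (set_mset \<pi>)"

definition large_parts :: "nat multiset \<Rightarrow> nat multiset" where
  "large_parts \<pi> = filter_mset (\<lambda>x. spart \<pi> < x) \<pi>"

definition Spt2_do :: "nat \<Rightarrow> nat multiset set" where
  "Spt2_do n = {\<pi> \<in> partitions n. \<pi> \<noteq> {#} \<and> count \<pi> (spart \<pi>) = 2 \<and>
      (\<forall>x\<in>#large_parts \<pi>. count \<pi> x = 1 \<and> (odd x \<longleftrightarrow> \<not> odd (spart \<pi>)))}"

definition spt2'_do :: "nat \<Rightarrow> int" where
  "spt2'_do n = int (card {\<pi> \<in> Spt2_do n. even (size (large_parts \<pi>))})
              - int (card {\<pi> \<in> Spt2_do n. odd (size (large_parts \<pi>))})"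

definition Pdo :: "nat \<Rightarrow> nat multiset set" where
  "Pdo n = {\<pi> \<in> partitions n. \<forall>x\<in>#\<pi>. odd x \<and> count \<pi> x = 1}"

definition p'_do :: "nat \<Rightarrow> int" where
  "p'_do n = int (card {\<pi> \<in> Pdo n. even (size \<pi>)}) - int (card {\<pi> \<in> Pdo n. odd (size \<pi>)})"

end

theory Submission
  imports Defs
begin

lemma mem_le_sum: "x \<in># (\<pi>::nat multiset) \<Longrightarrow> x \<le> sum_mset \<pi>"
proof -
  assume "x \<in># \<pi>"
  then obtain \<rho> where "\<pi> = add_mset x \<rho>" by (blast dest: multi_member_split)
  thus ?thesis by simp
qed

definition Dm :: "nat \<Rightarrow> nat \<Rightarrow> nat multiset set" where
  "Dm m n = {\<pi>. (\<forall>x\<in>#\<pi>. m \<le> x \<and> even (x - m) \<and> count \<pi> x = 1) \<and> sum_mset \<pi> = n}"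

definition sc :: "nat \<Rightarrow> nat \<Rightarrow> int" where
  "sc m n = (\<Sum>\<pi>\<in>Dm m n. (-1::int) ^ size \<pi>)"

lemma distinct_mset_eq: "(\<forall>x\<in>#\<pi>. count \<pi> x = 1) \<Longrightarrow> \<pi> = mset_set (set_mset \<pi>)"
  by (rule multiset_eqI) (auto simp: count_mset_set' count_eq_zero_iff)

lemma finite_Dm: "finite (Dm m n)"
proof (rule finite_subset)
  show "Dm m n \<subseteq> mset_set ` Pow {0..n}"
  proof
    fix \<pi> assume "\<pi> \<in> Dm m n"
    hence h: "\<forall>x\<in>#\<pi>. count \<pi> x = 1" "sum_mset \<pi> = n" by (auto simp: Dm_def)
    have "\<pi> = mset_set (set_mset \<pi>)" using h(1) by (rule distinct_mset_eq)
    moreover have "set_mset \<pi> \<in> Pow {0..n}" using mem_le_sum h(2) by auto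
    ultimately show "\<pi> \<in> mset_set ` Pow {0..n}" by blast
  qed
qed auto

lemma Dm_zero: "m \<ge> 1 \<Longrightarrow> Dm m 0 = {{#}}"
proof (rule set_eqI, rule iffI)
  fix \<pi> assume m: "m \<ge> 1" and "\<pi> \<in> Dm m 0"
  hence h: "\<forall>x\<in>#\<pi>. m \<le> x" "sum_mset \<pi> = 0" by (auto simp: Dm_def)
  have "\<pi> = {#}"
  proof (rule ccontr)
    assume "\<pi> \<noteq> {#}"
    then obtain x where x: "x \<in># \<pi>" by blast
    hence "x \<le> 0" using mem_le_sum h(2) by fastforce
    moreover have "m \<le> x" using h(1) x by blast
    ultimately show False using m by simp
  qed
  thus "\<pi> \<in> {{#}}" by simp
qed (auto simp: Dm_def)

lemma Dm_big: "0 < n \<Longrightarrow> n < m \<Longrightarrow> Dm m n = {}"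
proof (rule ccontr)
  assume n: "0 < n" "n < m" and "Dm m n \<noteq> {}"
  then obtain \<pi> where "\<pi> \<in> Dm m n" by blast
  hence h: "\<forall>x\<in>#\<pi>. m \<le> x" "sum_mset \<pi> = n" by (auto simp: Dm_def)
  have "\<pi> \<noteq> {#}" using h(2) n by auto
  then obtain x where x: "x \<in># \<pi>" by blast
  hence "x \<le> n" using mem_le_sum h(2) by fastforce
  moreover have "m \<le> x" using h(1) x by blast
  ultimately show False using n by simp
qed

lemma Dm_A: "{\<pi>\<in>Dm m n. m \<notin># \<pi>} = Dm (m+2) n"
proof -
  have *: "m \<le> x \<and> even (x - m) \<and> x \<noteq> m \<longleftrightarrow> m + 2 \<le> x \<and> even (x - (m+2))" for x :: nat
    by presburger
  show ?thesis
  proof (rule set_eqI, rule iffI)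
    fix \<pi> assume "\<pi> \<in> {\<pi>\<in>Dm m n. m \<notin># \<pi>}"
    hence h: "\<forall>x\<in>#\<pi>. m \<le> x \<and> even (x - m) \<and> count \<pi> x = 1" "sum_mset \<pi> = n" "m \<notin># \<pi>"
      by (auto simp: Dm_def)
    have "\<forall>x\<in>#\<pi>. m + 2 \<le> x \<and> even (x - (m+2)) \<and> count \<pi> x = 1"
    proof
      fix x assume x: "x \<in># \<pi>"
      hence "x \<noteq> m" using h(3) by blast
      thus "m + 2 \<le> x \<and> even (x - (m+2)) \<and> count \<pi> x = 1" using h(1) x * by blast
    qed
    thus "\<pi> \<in> Dm (m+2) n" using h(2) by (simp add: Dm_def)
  next
    fix \<pi> assume "\<pi> \<in> Dm (m+2) n"
    hence h: "\<forall>x\<in>#\<pi>. m + 2 \<le> x \<and> even (x - (m+2)) \<and> count \<pi> x = 1" "sum_mset \<pi> = n"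
      by (auto simp: Dm_def)
    have "\<forall>x\<in>#\<pi>. m \<le> x \<and> even (x - m) \<and> count \<pi> x = 1"
    proof
      fix x assume x: "x \<in># \<pi>"
      thus "m \<le> x \<and> even (x - m) \<and> count \<pi> x = 1" using h(1) x * by blast
    qed
    moreover have "m \<notin># \<pi>" using h(1) by fastforce
    ultimately show "\<pi> \<in> {\<pi>\<in>Dm m n. m \<notin># \<pi>}" using h(2) by (simp add: Dm_def)
  qed
qed

lemma Dm_B1: "m \<le> n \<Longrightarrow> {\<pi>\<in>Dm m n. m \<in># \<pi>} = add_mset m ` Dm (m+2) (n-m)"
proof (rule set_eqI, rule iffI)
  fix \<pi> assume "m \<le> n" and "\<pi> \<in> {\<pi>\<in>Dm m n. m \<in># \<pi>}"
  hence h: "\<forall>x\<in>#\<pi>. m \<le> x \<and> even (x - m) \<and> count \<pi> x = 1" "sum_mset \<pi> = n" "m \<in># \<pi>"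
    by (auto simp: Dm_def)
  define \<rho> where "\<rho> = \<pi> - {#m#}"
  have pi: "\<pi> = add_mset m \<rho>" using h(3) by (simp add: \<rho>_def)
  have cm: "count \<rho> m = 0" using h(1) h(3) by (simp add: \<rho>_def)
  have "\<rho> \<in> Dm (m+2) (n-m)"
    unfolding Dm_def
  proof (intro CollectI conjI ballI)
    fix x assume x: "x \<in># \<rho>"
    hence xm: "x \<noteq> m" using cm by (metis count_eq_zero_iff)
    have xp: "x \<in># \<pi>" using x pi by simp
    hence "m \<le> x" "even (x - m)" "count \<pi> x = 1" using h(1) by auto
    thus "m + 2 \<le> x" "even (x - (m+2))" using xm by presburger+
    show "count \<rho> x = 1" using \<open>count \<pi> x = 1\<close> xm pi by simp
  next
    show "sum_mset \<rho> = n - m" using h(2) pi by simp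
  qed
  thus "\<pi> \<in> add_mset m ` Dm (m+2) (n-m)" using pi by blast
next
  fix \<pi> assume mn: "m \<le> n" and "\<pi> \<in> add_mset m ` Dm (m+2) (n-m)"
  then obtain \<rho> where pi: "\<pi> = add_mset m \<rho>" and r: "\<rho> \<in> Dm (m+2) (n-m)" by blast
  hence h: "\<forall>x\<in>#\<rho>. m+2 \<le> x \<and> even (x - (m+2)) \<and> count \<rho> x = 1" "sum_mset \<rho> = n - m"
    by (auto simp: Dm_def)
  have cm: "m \<notin># \<rho>" using h(1) by fastforce
  have "\<forall>x\<in>#\<pi>. m \<le> x \<and> even (x - m) \<and> count \<pi> x = 1"
  proof
    fix x assume "x \<in># \<pi>"
    hence "x = m \<or> x \<in># \<rho>" using pi by simp
    thus "m \<le> x \<and> even (x - m) \<and> count \<pi> x = 1"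
    proof
      assume "x = m" thus ?thesis using pi cm by (simp add: count_eq_zero_iff)
    next
      assume x: "x \<in># \<rho>"
      hence "m+2 \<le> x" "even (x - (m+2))" "count \<rho> x = 1" using h(1) by auto
      moreover have "x \<noteq> m" using \<open>m+2 \<le> x\<close> by simp
      ultimately show ?thesis using pi by simp
    qed
  qed
  moreover have "sum_mset \<pi> = n" using pi h(2) mn by simp
  ultimately show "\<pi> \<in> {\<pi>\<in>Dm m n. m \<in># \<pi>}" using pi by (simp add: Dm_def)
qed

lemma Dm_B2: "n < m \<Longrightarrow> {\<pi>\<in>Dm m n. m \<in># \<pi>} = {}"
  by (auto simp: Dm_def dest: mem_le_sum)

lemma sc_rec: "sc m n = sc (m+2) n - (if m \<le> n then sc (m+2) (n-m) else 0)"
proof -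
  let ?f = "\<lambda>\<pi>::nat multiset. (-1::int) ^ size \<pi>"
  have split: "sc m n = (\<Sum>\<pi>\<in>{\<pi>\<in>Dm m n. m \<notin># \<pi>}. ?f \<pi>) + (\<Sum>\<pi>\<in>{\<pi>\<in>Dm m n. m \<in># \<pi>}. ?f \<pi>)"
    unfolding sc_def
    by (subst sum.union_disjoint[symmetric]) (auto intro: finite_subset[OF _ finite_Dm] intro!: sum.cong)
  show ?thesis
  proof (cases "m \<le> n")
    case True
    have "(\<Sum>\<pi>\<in>{\<pi>\<in>Dm m n. m \<in># \<pi>}. ?f \<pi>) = (\<Sum>\<pi>\<in>Dm (m+2) (n-m). ?f (add_mset m \<pi>))"
      unfolding Dm_B1[OF True] by (subst sum.reindex) (simp_all add: inj_on_def)
    also have "\<dots> = - sc (m+2) (n-m)" by (simp add: sc_def sum_negf)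
    finally show ?thesis using split True by (simp add: Dm_A sc_def)
  next
    case False
    thus ?thesis using split by (simp add: Dm_A Dm_B2 sc_def)
  qed
qed

lemma sc_zero: "m \<ge> 1 \<Longrightarrow> sc m 0 = 1"
  by (simp add: sc_def Dm_zero)

lemma sc_big: "0 < n \<Longrightarrow> n < m \<Longrightarrow> sc m n = 0"
  by (simp add: sc_def Dm_big)

definition S :: "nat \<Rightarrow> int \<Rightarrow> int" where
  "S m n = (if n < 0 then 0 else sc m (nat n))"

lemma S_rec: "m \<ge> 1 \<Longrightarrow> S m n = S (m+2) n - S (m+2) (n - int m)"
proof (cases "n < 0")
  case True thus ?thesis by (simp add: S_def)
next
  case False
  have "sc m (nat n) = sc (m+2) (nat n) - (if m \<le> nat n then sc (m+2) (nat n - m) else 0)"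
    by (rule sc_rec)
  moreover have "m \<le> nat n \<Longrightarrow> nat (n - int m) = nat n - m" by simp
  ultimately show ?thesis using False by (auto simp: S_def)
qed

lemma S_big: "n < int m \<Longrightarrow> m \<ge> 1 \<Longrightarrow> S m n = (if n = 0 then 1 else 0)"
  by (auto simp: S_def sc_zero sc_big)

lemma S_key: "j \<ge> 2 \<Longrightarrow> S (j+1) (N - int j) = S (j+1) (N-1) - S (j-1) (N-1)"
proof -
  assume j: "j \<ge> 2"
  have "S (j-1) (N-1) = S (j-1+2) (N-1) - S (j-1+2) (N-1 - int (j-1))"
    using j by (intro S_rec) simp
  moreover have "j - 1 + 2 = j + 1" using j by simp
  moreover have "N - 1 - int (j-1) = N - int j" using j by simp
  ultimately show ?thesis by simp
qed

lemma H1: "K \<ge> 2 \<Longrightarrow> (\<Sum>j<K. S (j+1) (N - int j)) = S 1 N - S 1 (N-1) + S K (N-1) + S (K-1) (N-1)"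
proof (induct K rule: nat_induct_at_least)
  case base
  show ?case by (simp add: numeral_2_eq_2)
next
  case (Suc K)
  have "S (K+1) (N - int K) = S (K+1) (N-1) - S (K-1) (N-1)" using Suc(1) by (rule S_key)
  thus ?case using Suc by simp
qed

lemma H2: "K \<ge> 2 \<Longrightarrow> (\<Sum>j<K. S (j+1) (n - 2 * int j)) =
    S 1 n - S 1 (n-1) + (\<Sum>j<K. S (j+1) (n - 1 - int j)) - (\<Sum>j<K-2. S (j+1) (n - 3 - int j))"
proof (induct K rule: nat_induct_at_least)
  case base
  show ?case by (simp add: numeral_2_eq_2)
next
  case (Suc K)
  have k0: "S (K+1) (n - int K - int K) = S (K+1) (n - int K - 1) - S (K-1) (n - int K - 1)"
    using Suc(1) by (rule S_key)
  have k: "S (K+1) (n - 2 * int K) = S (K+1) (n - 1 - int K) - S (K-1) (n - int K - 1)"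
    using k0 by (simp add: algebra_simps)
  have s1: "(\<Sum>j<Suc K. S (j+1) (n - 2 * int j)) = (\<Sum>j<K. S (j+1) (n - 2 * int j)) + S (K+1) (n - 2 * int K)"
    by simp
  have s2: "(\<Sum>j<Suc K. S (j+1) (n - 1 - int j)) = (\<Sum>j<K. S (j+1) (n - 1 - int j)) + S (K+1) (n - 1 - int K)"
    by simp
  have e: "Suc K - 2 = Suc (K - 2)" using Suc(1) by simp
  have e2: "K - 2 + 1 = K - 1" using Suc(1) by simp
  have e3: "n - 3 - int (K - 2) = n - int K - 1" using Suc(1) by simp
  have s3: "(\<Sum>j<Suc K - 2. S (j+1) (n - 3 - int j)) = (\<Sum>j<K-2. S (j+1) (n - 3 - int j)) + S (K-1) (n - int K - 1)"
    unfolding e sum.lessThan_Suc e2 e3 ..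
  show ?case using Suc(2) k s1 s2 s3 by linarith
qed

lemma signed_card: "finite A \<Longrightarrow>
  int (card {x\<in>A. even (f x)}) - int (card {x\<in>A. odd (f x)}) = (\<Sum>x\<in>A. (-1::int) ^ f x)"
proof -
  assume fA: "finite A"
  have "(\<Sum>x\<in>A. (-1::int) ^ f x) = (\<Sum>x\<in>A. if even (f x) then 1 else -1)"
    by (rule sum.cong) auto
  also have "\<dots> = (\<Sum>x\<in>{x\<in>A. even (f x)}. 1) + (\<Sum>x\<in>{x\<in>A. odd (f x)}. -1)"
    using fA by (simp add: sum.If_cases Int_def conj_commute)
  finally show ?thesis by simp
qed

lemma Pdo_Dm: "Pdo n = Dm 1 n"
proof -
  have *: "odd x \<longleftrightarrow> 1 \<le> x \<and> even (x - 1)" for x :: nat by presburger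
  have **: "odd x \<Longrightarrow> 0 < x" for x :: nat by presburger
  show ?thesis unfolding Pdo_def Dm_def partitions_def
  proof (rule set_eqI, rule iffI)
    fix \<pi> assume "\<pi> \<in> {\<pi> \<in> {\<pi>. (\<forall>x\<in>#\<pi>. 0 < x) \<and> sum_mset \<pi> = n}. \<forall>x\<in>#\<pi>. odd x \<and> count \<pi> x = 1}"
    thus "\<pi> \<in> {\<pi>. (\<forall>x\<in>#\<pi>. 1 \<le> x \<and> even (x - 1) \<and> count \<pi> x = 1) \<and> sum_mset \<pi> = n}"
      using * by blast
  next
    fix \<pi> assume "\<pi> \<in> {\<pi>. (\<forall>x\<in>#\<pi>. 1 \<le> x \<and> even (x - 1) \<and> count \<pi> x = 1) \<and> sum_mset \<pi> = n}"
    thus "\<pi> \<in> {\<pi> \<in> {\<pi>. (\<forall>x\<in>#\<pi>. 0 < x) \<and> sum_mset \<pi> = n}. \<forall>x\<in>#\<pi>. odd x \<and> count \<pi> x = 1}"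
      using * ** by blast
  qed
qed

lemma p'_do_S: "p'_do n = S 1 (int n)"
  unfolding p'_do_def S_def sc_def Pdo_Dm by (simp add: signed_card finite_Dm)

lemma add2_props:
  assumes "\<forall>x\<in>#L. s < x"
  shows "spart (add_mset s (add_mset s L)) = s" "large_parts (add_mset s (add_mset s L)) = L"
proof -
  show sp: "spart (add_mset s (add_mset s L)) = s"
    unfolding spart_def
    apply (rule Min_eqI)
    using assms by (auto intro: less_imp_le)
  show "large_parts (add_mset s (add_mset s L)) = L"
    unfolding large_parts_def sp using assms by (simp add: filter_mset_eq_conv)
qed

definition T :: "nat \<Rightarrow> nat \<Rightarrow> nat multiset set" where
  "T n s = (\<lambda>L. add_mset s (add_mset s L)) ` Dm (s+1) (n - 2*s)"

lemma Spt2_eq: "Spt2_do n = (\<Union>s\<in>{1..n div 2}. T n s)"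
proof (rule set_eqI, rule iffI)
  fix \<pi> assume "\<pi> \<in> Spt2_do n"
  hence pp: "\<forall>x\<in>#\<pi>. 0 < x" "sum_mset \<pi> = n" "\<pi> \<noteq> {#}" "count \<pi> (spart \<pi>) = 2"
     "\<forall>x\<in>#large_parts \<pi>. count \<pi> x = 1 \<and> (odd x \<longleftrightarrow> \<not> odd (spart \<pi>))"
    by (auto simp: Spt2_do_def partitions_def)
  define s where "s = spart \<pi>"
  define L where "L = large_parts \<pi>"
  have smin: "x \<in># \<pi> \<Longrightarrow> s \<le> x" for x
    unfolding s_def spart_def by simp
  have sin: "s \<in># \<pi>" using pp(3) unfolding s_def spart_def by simp
  have s1: "s \<ge> 1" using sin pp(1) by fastforce
  have pi: "\<pi> = add_mset s (add_mset s L)"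
  proof (rule multiset_eqI)
    fix x
    show "count \<pi> x = count (add_mset s (add_mset s L)) x"
    proof (cases "x < s")
      case True
      hence "x \<notin># \<pi>" using smin by fastforce
      thus ?thesis using True by (simp add: L_def large_parts_def s_def[symmetric] count_eq_zero_iff)
    next
      case False
      thus ?thesis using pp(4) by (cases "x = s") (auto simp: L_def large_parts_def s_def[symmetric])
    qed
  qed
  have Lgt: "\<forall>x\<in>#L. s < x" by (simp add: L_def large_parts_def s_def)
  have sumL: "sum_mset \<pi> = 2 * s + sum_mset L" using pi by simp
  have LD: "L \<in> Dm (s+1) (n - 2*s)"
    unfolding Dm_def
  proof (intro CollectI conjI ballI)
    fix x assume x: "x \<in># L"
    hence gt: "s < x" using Lgt by blast
    have "count \<pi> x = 1" "odd x \<longleftrightarrow> \<not> odd s" using pp(5) x by (auto simp: L_def s_def)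
    thus "s + 1 \<le> x" "even (x - (s+1))" using gt by presburger+
    show "count L x = 1" using \<open>count \<pi> x = 1\<close> gt pi by simp
  next
    show "sum_mset L = n - 2*s" using sumL pp(2) by simp
  qed
  have "2 * s \<le> n" using sumL pp(2) by simp
  hence "s \<in> {1..n div 2}" using s1 by auto
  thus "\<pi> \<in> (\<Union>s\<in>{1..n div 2}. T n s)" using LD pi unfolding T_def by blast
next
  fix \<pi> assume "\<pi> \<in> (\<Union>s\<in>{1..n div 2}. T n s)"
  then obtain s L where s: "1 \<le> s" "s \<le> n div 2" and LD: "L \<in> Dm (s+1) (n - 2*s)"
    and pi: "\<pi> = add_mset s (add_mset s L)" unfolding T_def by auto
  have h: "\<forall>x\<in>#L. s+1 \<le> x \<and> even (x - (s+1)) \<and> count L x = 1" "sum_mset L = n - 2*s"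
    using LD by (auto simp: Dm_def)
  have Lgt: "\<forall>x\<in>#L. s < x" using h(1) by fastforce
  note ap = add2_props[OF Lgt]
  have sL: "s \<notin># L" using Lgt by blast
  have part: "\<pi> \<in> partitions n"
    unfolding partitions_def using pi h s Lgt by auto
  have "\<forall>x\<in>#large_parts \<pi>. count \<pi> x = 1 \<and> (odd x \<longleftrightarrow> \<not> odd (spart \<pi>))"
  proof
    fix x assume "x \<in># large_parts \<pi>"
    hence x: "x \<in># L" using ap pi by simp
    hence "s + 1 \<le> x" "even (x - (s+1))" "count L x = 1" using h(1) by auto
    moreover have "x \<noteq> s" using \<open>s + 1 \<le> x\<close> by simp
    ultimately show "count \<pi> x = 1 \<and> (odd x \<longleftrightarrow> \<not> odd (spart \<pi>))"
      using pi ap by simp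
  qed
  moreover have "count \<pi> (spart \<pi>) = 2" using pi ap sL by (simp add: count_eq_zero_iff)
  ultimately show "\<pi> \<in> Spt2_do n" using part pi by (simp add: Spt2_do_def)
qed

lemma T_sum: "(\<Sum>\<pi>\<in>T n s. (-1::int) ^ size (large_parts \<pi>)) = sc (s+1) (n - 2*s)"
proof -
  have "(\<Sum>\<pi>\<in>T n s. (-1::int) ^ size (large_parts \<pi>))
      = (\<Sum>L\<in>Dm (s+1) (n - 2*s). (-1::int) ^ size (large_parts (add_mset s (add_mset s L))))"
    unfolding T_def by (subst sum.reindex) (simp_all add: inj_on_def)
  also have "\<dots> = (\<Sum>L\<in>Dm (s+1) (n - 2*s). (-1::int) ^ size L)"
  proof (rule sum.cong)
    fix L assume "L \<in> Dm (s+1) (n - 2*s)"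
    hence "\<forall>x\<in>#L. s < x" by (auto simp: Dm_def)
    thus "(-1::int) ^ size (large_parts (add_mset s (add_mset s L))) = (-1) ^ size L"
      using add2_props by simp
  qed simp
  finally show ?thesis by (simp add: sc_def)
qed

lemma T_disj: "s \<noteq> s' \<Longrightarrow> T n s \<inter> T n s' = {}"
proof (rule ccontr)
  assume ne: "s \<noteq> s'" and "T n s \<inter> T n s' \<noteq> {}"
  then obtain L L' where L: "L \<in> Dm (s+1) (n - 2*s)" and L': "L' \<in> Dm (s'+1) (n - 2*s')"
    and eq: "add_mset s (add_mset s L) = add_mset s' (add_mset s' L')" unfolding T_def by blast
  have g: "\<forall>x\<in>#L. s < x" "\<forall>x\<in>#L'. s' < x" using L L' by (auto simp: Dm_def)
  have "spart (add_mset s (add_mset s L)) = s" "spart (add_mset s' (add_mset s' L')) = s'"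
    using add2_props g by auto
  thus False using eq ne by simp
qed

lemma spt_sum: "spt2'_do n = (\<Sum>s\<in>{1..n div 2}. sc (s+1) (n - 2*s))"
proof -
  have fin: "finite (Spt2_do n)" unfolding Spt2_eq T_def using finite_Dm by auto
  have "spt2'_do n = (\<Sum>\<pi>\<in>Spt2_do n. (-1::int) ^ size (large_parts \<pi>))"
    unfolding spt2'_do_def using fin by (rule signed_card)
  also have "\<dots> = (\<Sum>s\<in>{1..n div 2}. \<Sum>\<pi>\<in>T n s. (-1::int) ^ size (large_parts \<pi>))"
    unfolding Spt2_eq
    by (rule sum.UNION_disjoint) (simp, simp add: T_def finite_Dm, use T_disj in blast)
  finally show ?thesis by (simp add: T_sum)
qed

theorem corollary8:
  fixes n :: nat
  assumes "n \<ge> 5"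
  shows "spt2'_do n = p'_do (n - 4) - p'_do (n - 3) - p'_do (n - 2)"
proof -
  define K where "K = n + 3"
  have K2: "K \<ge> 2" by (simp add: K_def)
  have a: "spt2'_do n = (\<Sum>j\<in>{1..<K}. S (j+1) (int n - 2 * int j))"
  proof -
    have "spt2'_do n = (\<Sum>s\<in>{1..n div 2}. S (s+1) (int n - 2 * int s))"
      unfolding spt_sum
    proof (rule sum.cong)
      fix x assume "x \<in> {1..n div 2}"
      hence "x \<le> n div 2" by simp
      hence le: "2 * x \<le> n" by presburger
      hence n1: "\<not> (int n - 2 * int x < 0)" by linarith
      have n2: "nat (int n - 2 * int x) = n - 2 * x" using le by linarith
      show "sc (x + 1) (n - 2 * x) = S (x + 1) (int n - 2 * int x)"
        unfolding S_def using n1 n2 by simp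
    qed simp
    also have "\<dots> = (\<Sum>j\<in>{1..<K}. S (j+1) (int n - 2 * int j))"
    proof (rule sum.mono_neutral_left)
      show "finite {1..<K}" by simp
      show "{1..n div 2} \<subseteq> {1..<K}" by (auto simp: K_def)
      show "\<forall>i\<in>{1..<K} - {1..n div 2}. S (i+1) (int n - 2 * int i) = 0"
      proof
        fix i assume "i \<in> {1..<K} - {1..n div 2}"
        hence "n div 2 < i" by auto
        hence "n < 2 * i" by presburger
        hence "int n - 2 * int i < 0" by linarith
        thus "S (i+1) (int n - 2 * int i) = 0" by (simp add: S_def)
      qed
    qed
    finally show ?thesis .
  qed
  have b: "(\<Sum>j<K. S (j+1) (int n - 2 * int j)) = S 1 (int n) + (\<Sum>j\<in>{1..<K}. S (j+1) (int n - 2 * int j))"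
  proof -
    have "{..<K} = insert 0 {1..<K}" using K2 by auto
    thus ?thesis by simp
  qed
  have z: "S m x = 0" if "x < int m" "m \<ge> 1" "x \<noteq> 0" for m x
    using S_big[OF that(1,2)] that(3) by simp
  have h1: "(\<Sum>j<K. S (j+1) (int n - 1 - int j)) = S 1 (int n - 1) - S 1 (int n - 1 - 1)
      + S K (int n - 1 - 1) + S (K-1) (int n - 1 - 1)"
    by (rule H1[OF K2])
  have z1: "S K (int n - 1 - 1) = 0" "S (K-1) (int n - 1 - 1) = 0"
    using assms by (intro z; simp add: K_def)+
  have e1: "int n - 1 - 1 = int n - 2" by simp
  have c1: "(\<Sum>j<K. S (j+1) (int n - 1 - int j)) = S 1 (int n - 1) - S 1 (int n - 2)"
    using h1 z1 unfolding e1 by linarith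
  have K22: "K - 2 \<ge> 2" using assms by (simp add: K_def)
  have h2: "(\<Sum>j<K-2. S (j+1) (int n - 3 - int j)) = S 1 (int n - 3) - S 1 (int n - 3 - 1)
      + S (K-2) (int n - 3 - 1) + S (K-2-1) (int n - 3 - 1)"
    by (rule H1[OF K22])
  have z2: "S (K-2) (int n - 3 - 1) = 0" "S (K-2-1) (int n - 3 - 1) = 0"
    using assms by (intro z; simp add: K_def)+
  have e2: "int n - 3 - 1 = int n - 4" by simp
  have c2: "(\<Sum>j<K-2. S (j+1) (int n - 3 - int j)) = S 1 (int n - 3) - S 1 (int n - 4)"
    using h2 z2 unfolding e2 by linarith
  have h3: "(\<Sum>j<K. S (j+1) (int n - 2 * int j)) =
    S 1 (int n) - S 1 (int n - 1) + (\<Sum>j<K. S (j+1) (int n - 1 - int j)) - (\<Sum>j<K-2. S (j+1) (int n - 3 - int j))"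
    by (rule H2[OF K2])
  have "spt2'_do n = - S 1 (int n - 2) - S 1 (int n - 3) + S 1 (int n - 4)"
    using a b h3 c1 c2 by linarith
  moreover have "p'_do (n - 4) = S 1 (int n - 4)" "p'_do (n - 3) = S 1 (int n - 3)"
    "p'_do (n - 2) = S 1 (int n - 2)" using assms by (simp_all only: p'_do_S of_nat_diff, simp_all)
  ultimately show ?thesis by linarith
qed

end
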